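(* Let $p,r$ be positive integers, $s=p+2r$, and write elements of $\mathbb{R}^{(p+s)\times p}$ as $X=(X_0;X_1;X_2;X_3)$ with blocks of $p,p,r,r$ rows; set $Z=X_0+iX_1$, $W=X_2+iX_3$. Let $\hat M\in\mathfrak{so}(p+r,\mathbb{C})$ and define $\hat\Phi^*:\mathbb{R}^{(p+s)\times p}\to\mathbb{C}^{(p+r)\times p}$ by $\hat\Phi^*(X)=\binom{Z}{W}+\hat M\binom{\bar Z}{\bar W}$. Then the complex valued components of $\hat\Phi^*$ constitute an orthogonal harmonic family on $\mathbb{R}^{(p+s)\times p}$ equipped with the Euclidean metric.
   Context: $\mathfrak{so}(p+r,\mathbb{C})$ is the set of complex skew-symmetric $(p+r)\times(p+r)$ matrices. The Euclidean metric is $\langle X,Y\rangle=\mathrm{trace}(X^tY)$. For a Riemannian manifold $(M,g)$ and complex functions $\phi,\psi$, $\tau(\phi)$ is the Laplace–Beltrami operator (extended complex-linearly) and $\kappa(\phi,\psi)=g(\mathrm{grad}\,\phi,\mathrm{grad}\,\psi)$ with $g$ extended complex-bilinearly. A set $\Omega$ of complex functions is an orthogonal harmonic family if $\tau(\phi)=0$ and $\kappa(\phi,\psi)=0$ for all $\phi,\psi\in\Omega$. *)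

theory Defs
  imports "HOL-Analysis.Analysis"
begin

text \<open>A point of the real matrix space R^{N x m} is represented as X :: nat => nat => real,
  only the entries X i j with i < N, j < m being coordinates.\<close>

definition coord_shift :: "(nat \<Rightarrow> nat \<Rightarrow> real) \<Rightarrow> nat \<Rightarrow> nat \<Rightarrow> real \<Rightarrow> (nat \<Rightarrow> nat \<Rightarrow> real)" where
  "coord_shift X i j t = X(i := (X i)(j := X i j + t))"

definition partial_ij :: "((nat \<Rightarrow> nat \<Rightarrow> real) \<Rightarrow> complex) \<Rightarrow> nat \<Rightarrow> nat \<Rightarrow> (nat \<Rightarrow> nat \<Rightarrow> real) \<Rightarrow> complex" where
  "partial_ij f i j X = vector_derivative (\<lambda>t. f (coord_shift X i j t)) (at 0)"

definition tension :: "nat \<Rightarrow> nat \<Rightarrow> ((nat \<Rightarrow> nat \<Rightarrow> real) \<Rightarrow> complex) \<Rightarrow> (nat \<Rightarrow> nat \<Rightarrow> real) \<Rightarrow> complex" where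
  "tension N m f X = (\<Sum>i<N. \<Sum>j<m. partial_ij (partial_ij f i j) i j X)"

definition conformality :: "nat \<Rightarrow> nat \<Rightarrow> ((nat \<Rightarrow> nat \<Rightarrow> real) \<Rightarrow> complex) \<Rightarrow> ((nat \<Rightarrow> nat \<Rightarrow> real) \<Rightarrow> complex) \<Rightarrow> (nat \<Rightarrow> nat \<Rightarrow> real) \<Rightarrow> complex" where
  "conformality N m f g X = (\<Sum>i<N. \<Sum>j<m. partial_ij f i j X * partial_ij g i j X)"

definition orthogonal_harmonic_family :: "nat \<Rightarrow> nat \<Rightarrow> ((nat \<Rightarrow> nat \<Rightarrow> real) \<Rightarrow> complex) set \<Rightarrow> bool" where
  "orthogonal_harmonic_family N m \<Omega> \<longleftrightarrow>
     (\<forall>\<phi>\<in>\<Omega>. \<forall>X. tension N m \<phi> X = 0) \<and>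
     (\<forall>\<phi>\<in>\<Omega>. \<forall>\<psi>\<in>\<Omega>. \<forall>X. conformality N m \<phi> \<psi> X = 0)"

definition ZW :: "nat \<Rightarrow> nat \<Rightarrow> (nat \<Rightarrow> nat \<Rightarrow> real) \<Rightarrow> nat \<Rightarrow> nat \<Rightarrow> complex" where
  "ZW p r X a b =
     (if a < p then complex_of_real (X a b) + \<i> * complex_of_real (X (p + a) b)
      else complex_of_real (X (2*p + (a - p)) b) + \<i> * complex_of_real (X (2*p + r + (a - p)) b))"

definition PhiStar :: "nat \<Rightarrow> nat \<Rightarrow> (nat \<Rightarrow> nat \<Rightarrow> complex) \<Rightarrow> (nat \<Rightarrow> nat \<Rightarrow> real) \<Rightarrow> nat \<Rightarrow> nat \<Rightarrow> complex" where
  "PhiStar p r M X a b = ZW p r X a b + (\<Sum>c<p+r. M a c * cnj (ZW p r X c b))"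

end

theory Submission
  imports Defs
begin

definition uu :: "nat \<Rightarrow> nat \<Rightarrow> nat" where "uu p c = (if c < p then c else p + c)"
definition vv :: "nat \<Rightarrow> nat \<Rightarrow> nat \<Rightarrow> nat" where "vv p r c = (if c < p then p + c else p + r + c)"
definition dl :: "nat \<Rightarrow> nat \<Rightarrow> nat \<Rightarrow> nat \<Rightarrow> real" where
  "dl i j = (\<lambda>k l. if k = i \<and> l = j then 1 else 0)"
definition ee :: "nat \<Rightarrow> nat \<Rightarrow> nat \<Rightarrow> nat \<Rightarrow> complex" where
  "ee p r c i = (if i = uu p c then 1 else if i = vv p r c then \<i> else 0)"

lemma coord_shift_lin: "coord_shift X i j t = (\<lambda>k l. X k l + t * dl i j k l)"
  unfolding coord_shift_def dl_def by (auto simp: fun_eq_iff)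

lemma ZW_lin: "ZW p r (\<lambda>k l. X k l + t * Y k l) c b = ZW p r X c b + of_real t * ZW p r Y c b"
  unfolding ZW_def by (simp add: algebra_simps)

lemma PhiStar_lin: "PhiStar p r M (\<lambda>k l. X k l + t * Y k l) a b
   = PhiStar p r M X a b + of_real t * PhiStar p r M Y a b"
  unfolding PhiStar_def ZW_lin
  by (simp add: algebra_simps sum.distrib sum_distrib_left)

lemma partial_lin:
  assumes "\<And>t. f (coord_shift X i j t) = f X + of_real t * D"
  shows "partial_ij f i j X = D"
proof -
  have e: "(\<lambda>t. f (coord_shift X i j t)) = (\<lambda>t. f X + t *\<^sub>R D)"
    using assms by (simp add: fun_eq_iff scaleR_conv_of_real)
  have "((\<lambda>t. f X + t *\<^sub>R D) has_vector_derivative D) (at 0)"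
    by (auto intro!: derivative_eq_intros)
  then show ?thesis unfolding partial_ij_def e by (rule vector_derivative_at)
qed

lemma partial_Phi: "partial_ij (\<lambda>X. PhiStar p r M X a b) i j X = PhiStar p r M (dl i j) a b"
  by (rule partial_lin) (simp add: coord_shift_lin PhiStar_lin)

lemma partial_const: "partial_ij (\<lambda>X. D) i j X = 0"
  by (rule partial_lin) simp

lemma ZW_dl: assumes "p > 0" "r > 0" shows "ZW p r (dl i j) c b = (if j = b then ee p r c i else 0)"
  unfolding ZW_def dl_def ee_def uu_def vv_def using assms by auto

definition GG :: "nat \<Rightarrow> nat \<Rightarrow> (nat \<Rightarrow> nat \<Rightarrow> complex) \<Rightarrow> nat \<Rightarrow> nat \<Rightarrow> complex" where
  "GG p r M a i = ee p r a i + (\<Sum>c<p+r. M a c * cnj (ee p r c i))"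

lemma Phi_dl: assumes "p > 0" "r > 0"
  shows "PhiStar p r M (dl i j) a b = (if j = b then GG p r M a i else 0)"
  unfolding PhiStar_def GG_def ZW_dl[OF assms] by auto

lemma uu_vv_ne: "c < p + r \<Longrightarrow> d < p + r \<Longrightarrow> uu p c \<noteq> vv p r d"
  unfolding uu_def vv_def by auto

lemma uu_inj: "inj_on (uu p) {..<p+r}"
  unfolding uu_def inj_on_def by auto

lemma vv_inj: "inj_on (vv p r) {..<p+r}"
  unfolding vv_def inj_on_def by auto

lemma cover: "{..<p + (p + 2*r)} = uu p ` {..<p+r} \<union> vv p r ` {..<p+r}"
proof
  show "uu p ` {..<p+r} \<union> vv p r ` {..<p+r} \<subseteq> {..<p + (p + 2*r)}"
    unfolding uu_def vv_def by auto
  show "{..<p + (p + 2*r)} \<subseteq> uu p ` {..<p+r} \<union> vv p r ` {..<p+r}"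
  proof
    fix i assume i: "i \<in> {..<p + (p + 2*r)}"
    consider "i < p" | "p \<le> i" "i < 2*p" | "2*p \<le> i" "i < 2*p + r" | "2*p+r \<le> i" by linarith
    then show "i \<in> uu p ` {..<p+r} \<union> vv p r ` {..<p+r}"
    proof cases
      case 1 then have "i = uu p i" "i < p + r" by (auto simp: uu_def)
      then show ?thesis by blast
    next
      case 2 then have "i = vv p r (i - p)" "i - p < p + r" by (auto simp: vv_def)
      then show ?thesis by blast
    next
      case 3 then have "i = uu p (i - p)" "i - p < p + r" by (auto simp: uu_def)
      then show ?thesis by blast
    next
      case 4 then have "i = vv p r (i - p - r)" "i - p - r < p + r" using i by (auto simp: vv_def)
      then show ?thesis by blast
    qed
  qed
qed

lemma sum_cover: "(\<Sum>i<p + (p + 2*r). h i) = (\<Sum>c<p+r. h (uu p c) + h (vv p r c))"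
proof -
  have d: "uu p ` {..<p+r} \<inter> vv p r ` {..<p+r} = {}" using uu_vv_ne by blast
  show ?thesis unfolding cover
    by (simp add: sum.union_disjoint d sum.reindex uu_inj vv_inj sum.distrib)
qed

lemma ee_uu: "c < p + r \<Longrightarrow> d < p + r \<Longrightarrow> ee p r d (uu p c) = (if d = c then 1 else 0)"
  unfolding ee_def using uu_vv_ne[of c p r d] uu_inj[of p r] by (auto simp: inj_on_def)

lemma ee_vv: "c < p + r \<Longrightarrow> d < p + r \<Longrightarrow> ee p r d (vv p r c) = (if d = c then \<i> else 0)"
  unfolding ee_def using uu_vv_ne[of d p r c] vv_inj[of p r] by (auto simp: inj_on_def)

lemma GG_uu: assumes "a < p + r" "c < p + r"
  shows "GG p r M a (uu p c) = (if a = c then 1 else 0) + M a c"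
proof -
  have "(\<Sum>d<p+r. M a d * cnj (ee p r d (uu p c))) = (\<Sum>d<p+r. if d = c then M a d else 0)"
    by (rule sum.cong) (auto simp: ee_uu assms)
  also have "\<dots> = M a c" using assms by simp
  finally show ?thesis unfolding GG_def using assms by (simp add: ee_uu)
qed

lemma GG_vv: assumes "a < p + r" "c < p + r"
  shows "GG p r M a (vv p r c) = \<i> * (if a = c then 1 else 0) - \<i> * M a c"
proof -
  have "(\<Sum>d<p+r. M a d * cnj (ee p r d (vv p r c))) = (\<Sum>d<p+r. if d = c then - \<i> * M a d else 0)"
    by (rule sum.cong) (auto simp: ee_vv assms)
  also have "\<dots> = - \<i> * M a c" using assms by simp
  finally show ?thesis unfolding GG_def using assms by (simp add: ee_vv)
qed

lemma ident: "((x::complex)+u)*(y + v) + (\<i>*x - \<i>*u)*(\<i>*y - \<i> * v) = 2*(x * v + u * y)"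
proof -
  have "(\<i>*x - \<i>*u)*(\<i>*y - \<i> * v) = (\<i>*\<i>)*((x-u)*(y - v))" by (simp add: algebra_simps)
  also have "\<dots> = -((x-u)*(y - v))" by simp
  finally show ?thesis by (simp add: algebra_simps)
qed

lemma GG_orth:
  assumes skew: "\<forall>a<p+r. \<forall>c<p+r. M a c = - M c a"
    and a: "a < p + r" and a': "a' < p + r"
  shows "(\<Sum>i<p + (p + 2*r). GG p r M a i * GG p r M a' i) = 0"
proof -
  have step: "GG p r M a (uu p c) * GG p r M a' (uu p c) + GG p r M a (vv p r c) * GG p r M a' (vv p r c)
      = 2 * ((if a = c then 1 else 0) * M a' c + M a c * (if a' = c then 1 else 0))"
    if c: "c \<in> {..<p+r}" for c
  proof -
    have "GG p r M a (uu p c) * GG p r M a' (uu p c) + GG p r M a (vv p r c) * GG p r M a' (vv p r c)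
      = ((if a = c then 1 else 0) + M a c) * ((if a' = c then 1 else 0) + M a' c)
        + (\<i> * (if a = c then 1 else 0) - \<i> * M a c) * (\<i> * (if a' = c then 1 else 0) - \<i> * M a' c)"
      using c a a' by (simp only: GG_uu GG_vv lessThan_iff)
    also have "\<dots> = 2 * ((if a = c then 1 else 0) * M a' c + M a c * (if a' = c then 1 else 0))"
      by (rule ident)
    finally show ?thesis .
  qed
  have "(\<Sum>i<p + (p + 2*r). GG p r M a i * GG p r M a' i)
     = (\<Sum>c<p+r. 2 * ((if a = c then 1 else 0) * M a' c + M a c * (if a' = c then 1 else 0)))"
    unfolding sum_cover by (rule sum.cong[OF refl step])
  also have "\<dots> = (\<Sum>c<p+r. 2 * (if c = a then M a' c else 0) + 2 * (if c = a' then M a c else 0))"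
    by (rule sum.cong) auto
  also have "\<dots> = 2 * M a' a + 2 * M a a'"
    using a a' by (simp only: sum.distrib sum_distrib_left[symmetric] sum.delta finite_lessThan lessThan_iff if_True)
  also have "\<dots> = 0" using skew[rule_format, OF a a'] by simp
  finally show ?thesis .
qed

theorem proposition9p1:
  fixes p r :: nat and M :: "nat \<Rightarrow> nat \<Rightarrow> complex"
  assumes "p > 0" and "r > 0"
    and skew: "\<forall>a<p+r. \<forall>c<p+r. M a c = - M c a"
  shows "orthogonal_harmonic_family (p + (p + 2*r)) p
           {(\<lambda>X. PhiStar p r M X a b) | a b. a < p + r \<and> b < p}"
  unfolding orthogonal_harmonic_family_def
proof safe
  fix a b X assume "a < p + r" "b < p"
  show "tension (p + (p + 2*r)) p (\<lambda>X. PhiStar p r M X a b) X = 0"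
    unfolding tension_def partial_Phi[abs_def] partial_const by simp
next
  fix a b a' b' X assume a: "a < p + r" "b < p" and a': "a' < p + r" "b' < p"
  have "conformality (p + (p + 2*r)) p (\<lambda>X. PhiStar p r M X a b) (\<lambda>X. PhiStar p r M X a' b') X
     = (\<Sum>i<p + (p + 2*r). \<Sum>j<p. (if j = b then GG p r M a i else 0) * (if j = b' then GG p r M a' i else 0))"
    unfolding conformality_def partial_Phi Phi_dl[OF assms(1,2)] ..
  also have "\<dots> = (\<Sum>i<p + (p + 2*r). if b = b' then GG p r M a i * GG p r M a' i else 0)"
    by (rule sum.cong) (auto simp: a a' if_distrib[of "\<lambda>x. x * _"] cong: if_cong)
  also have "\<dots> = 0" using GG_orth[OF skew a(1) a'(1)] by (cases "b = b'") simp_all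
  finally show "conformality (p + (p + 2*r)) p (\<lambda>X. PhiStar p r M X a b) (\<lambda>X. PhiStar p r M X a' b') X = 0" .
qed

end
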